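(* Let $X$ and $Y$ be bounded degree graphs with $X$ amenable, and let $f\colon X\to Y$ be a quasi-isometry. If $f$ is both quasi-$k$-to-one and quasi-$k'$-to-one for some $k,k'>0$, then $k=k'$.
   Context: Graphs carry their path metric. For $A\subset Y$, $\partial_Y A$ is the set of vertices of $Y\setminus A$ adjacent to some vertex of $A$. For $k>0$, a quasi-isometry $f\colon X\to Y$ is quasi-$k$-to-one if there is $C>0$ with $\bigl|k|A|-|f^{-1}(A)|\bigr|\le C|\partial_Y A|$ for every finite $A\subset Y$. A bounded degree graph is amenable if it admits a Følner sequence, i.e. finite sets $F_n$ with $|\partial F_n|/|F_n|\to0$. *)

theory Defs
  imports "HOL-Analysis.Analysis"
begin

definition is_graph :: "'a set \<Rightarrow> ('a \<Rightarrow> 'a \<Rightarrow> bool) \<Rightarrow> bool" where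
  "is_graph V E \<longleftrightarrow> (\<forall>x y. E x y \<longrightarrow> x \<in> V \<and> y \<in> V \<and> E y x \<and> x \<noteq> y)"

definition is_walk :: "('a \<Rightarrow> 'a \<Rightarrow> bool) \<Rightarrow> 'a list \<Rightarrow> bool" where
  "is_walk E xs \<longleftrightarrow> xs \<noteq> [] \<and> (\<forall>i. Suc i < length xs \<longrightarrow> E (xs ! i) (xs ! Suc i))"

definition graph_connected :: "'a set \<Rightarrow> ('a \<Rightarrow> 'a \<Rightarrow> bool) \<Rightarrow> bool" where
  "graph_connected V E \<longleftrightarrow>
     (\<forall>x\<in>V. \<forall>y\<in>V. \<exists>xs. is_walk E xs \<and> hd xs = x \<and> last xs = y)"

definition gdist :: "('a \<Rightarrow> 'a \<Rightarrow> bool) \<Rightarrow> 'a \<Rightarrow> 'a \<Rightarrow> nat" where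
  "gdist E x y = (LEAST n. \<exists>xs. is_walk E xs \<and> hd xs = x \<and> last xs = y \<and> length xs = Suc n)"

text \<open>Bounded degree graph (connected, so the path metric is a genuine metric).\<close>

definition bounded_degree_graph :: "'a set \<Rightarrow> ('a \<Rightarrow> 'a \<Rightarrow> bool) \<Rightarrow> bool" where
  "bounded_degree_graph V E \<longleftrightarrow> is_graph V E \<and> graph_connected V E \<and>
     (\<exists>D::nat. \<forall>x\<in>V. finite {y. E x y} \<and> card {y. E x y} \<le> D)"

definition vboundary :: "'a set \<Rightarrow> ('a \<Rightarrow> 'a \<Rightarrow> bool) \<Rightarrow> 'a set \<Rightarrow> 'a set" where
  "vboundary V E A = {y \<in> V - A. \<exists>x\<in>A. E x y}"

definition amenable_graph :: "'a set \<Rightarrow> ('a \<Rightarrow> 'a \<Rightarrow> bool) \<Rightarrow> bool" where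
  "amenable_graph V E \<longleftrightarrow> (\<exists>F :: nat \<Rightarrow> 'a set.
     (\<forall>n. finite (F n) \<and> F n \<noteq> {} \<and> F n \<subseteq> V) \<and>
     (\<lambda>n. real (card (vboundary V E (F n))) / real (card (F n))) \<longlonglongrightarrow> 0)"

definition quasi_isometry ::
  "'a set \<Rightarrow> ('a \<Rightarrow> 'a \<Rightarrow> bool) \<Rightarrow> 'b set \<Rightarrow> ('b \<Rightarrow> 'b \<Rightarrow> bool) \<Rightarrow> ('a \<Rightarrow> 'b) \<Rightarrow> bool" where
  "quasi_isometry VX EdX VY EdY f \<longleftrightarrow> f ` VX \<subseteq> VY \<and>
     (\<exists>K C::real. K \<ge> 1 \<and> C \<ge> 0 \<and>
        (\<forall>x\<in>VX. \<forall>x'\<in>VX.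
           real (gdist EdY (f x) (f x')) \<le> K * real (gdist EdX x x') + C \<and>
           real (gdist EdX x x') \<le> K * real (gdist EdY (f x) (f x')) + C) \<and>
        (\<forall>y\<in>VY. \<exists>x\<in>VX. real (gdist EdY y (f x)) \<le> C))"

definition quasi_k_to_one ::
  "'a set \<Rightarrow> ('a \<Rightarrow> 'a \<Rightarrow> bool) \<Rightarrow> 'b set \<Rightarrow> ('b \<Rightarrow> 'b \<Rightarrow> bool) \<Rightarrow> ('a \<Rightarrow> 'b) \<Rightarrow> real \<Rightarrow> bool" where
  "quasi_k_to_one VX EdX VY EdY f k \<longleftrightarrow> quasi_isometry VX EdX VY EdY f \<and>
     (\<exists>C::real. C > 0 \<and> (\<forall>A. finite A \<and> A \<subseteq> VY \<longrightarrow>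
        \<bar>k * real (card A) - real (card {x \<in> VX. f x \<in> A})\<bar>
          \<le> C * real (card (vboundary VY EdY A))))"

end

theory Submission
  imports Defs
begin

lemma walk_Nil[simp]: "\<not> is_walk E []"
  by (simp add: is_walk_def)

lemma walk_single[simp]: "is_walk E [x]"
  by (simp add: is_walk_def)

lemma walk_Cons2[simp]: "is_walk E (x#y#zs) \<longleftrightarrow> E x y \<and> is_walk E (y#zs)"
  unfolding is_walk_def
proof safe
  assume "\<forall>i. Suc i < length (x # y # zs) \<longrightarrow> E ((x # y # zs) ! i) ((x # y # zs) ! Suc i)"
  then have h: "\<And>i. Suc i < length (x # y # zs) \<Longrightarrow> E ((x # y # zs) ! i) ((x # y # zs) ! Suc i)" by blast
  show "E x y" using h[of 0] by simp
  fix i assume "Suc i < length (y # zs)"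
  then show "E ((y # zs) ! i) ((y # zs) ! Suc i)" using h[of "Suc i"] by simp
next
  fix i assume "E x y" and h: "\<forall>i. Suc i < length (y # zs) \<longrightarrow> E ((y # zs) ! i) ((y # zs) ! Suc i)"
    and "Suc i < length (x # y # zs)"
  then show "E ((x # y # zs) ! i) ((x # y # zs) ! Suc i)"
    by (cases i) auto
qed

lemma walk_ConsD: "is_walk E (x#xs) \<Longrightarrow> xs \<noteq> [] \<Longrightarrow> is_walk E xs \<and> E x (hd xs)"
  by (cases xs) auto

lemma walk_append:
  "is_walk E xs \<Longrightarrow> is_walk E ys \<Longrightarrow> last xs = hd ys \<Longrightarrow> is_walk E (xs @ tl ys)"
proof (induction xs)
  case Nil then show ?case by simp
next
  case (Cons x xs)
  show ?case
  proof (cases xs)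
    case Nil
    then show ?thesis using Cons by (cases ys) auto
  next
    case (Cons y zs)
    then show ?thesis using Cons.prems Cons.IH by (cases "zs @ tl ys") auto
  qed
qed

lemma walk_rev:
  assumes sym: "\<And>a b. E a b \<Longrightarrow> E b a"
  shows "is_walk E xs \<Longrightarrow> is_walk E (rev xs)"
proof (induction xs)
  case Nil then show ?case by simp
next
  case (Cons x xs)
  show ?case
  proof (cases xs)
    case Nil then show ?thesis by simp
  next
    case (Cons y ys)
    have w: "is_walk E (rev xs)" using Cons Cons.prems Cons.IH by simp
    have e: "E y x" using Cons Cons.prems sym by simp
    have "is_walk E (rev xs @ tl [y, x])"
      by (rule walk_append[OF w]) (use Cons e in auto)
    then show ?thesis by simp
  qed
qed

lemma gdist_walk:
  assumes "graph_connected V E" "x \<in> V" "y \<in> V"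
  shows "\<exists>xs. is_walk E xs \<and> hd xs = x \<and> last xs = y \<and> length xs = Suc (gdist E x y)"
proof -
  obtain xs where xs: "is_walk E xs" "hd xs = x" "last xs = y"
    using assms unfolding graph_connected_def by blast
  then have "\<exists>n. \<exists>xs. is_walk E xs \<and> hd xs = x \<and> last xs = y \<and> length xs = Suc n"
    by (intro exI[of _ "length xs - 1"] exI[of _ xs]) (cases xs, auto)
  then show ?thesis unfolding gdist_def by (rule LeastI_ex)
qed

lemma walk_gdist:
  assumes "is_walk E xs" "hd xs = x" "last xs = y" "length xs \<le> Suc m"
  shows "gdist E x y \<le> m"
proof -
  have "gdist E x y \<le> length xs - 1"
    unfolding gdist_def
    by (rule Least_le) (use assms in \<open>cases xs, auto\<close>)
  then show ?thesis using assms(4) by simp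
qed

lemma gdist_self: "gdist E x x = 0"
  using walk_gdist[of E "[x]" x x 0] by simp

lemma gdist_edge: "E x y \<Longrightarrow> gdist E x y \<le> 1"
  using walk_gdist[of E "[x,y]" x y 1] by simp

lemma gdist_sym:
  assumes "is_graph V E" "graph_connected V E" "x \<in> V" "y \<in> V"
  shows "gdist E y x \<le> gdist E x y"
proof -
  obtain xs where xs: "is_walk E xs" "hd xs = x" "last xs = y" "length xs = Suc (gdist E x y)"
    using gdist_walk[OF assms(2-4)] by blast
  have sym: "\<And>a b. E a b \<Longrightarrow> E b a" using assms(1) unfolding is_graph_def by blast
  have "is_walk E (rev xs)" using walk_rev[OF sym xs(1)] .
  moreover have "xs \<noteq> []" using xs by auto
  ultimately show ?thesis
    using xs by (intro walk_gdist[of E "rev xs"]) (auto simp: hd_rev last_rev)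
qed

lemma gdist_sym_eq:
  assumes "is_graph V E" "graph_connected V E" "x \<in> V" "y \<in> V"
  shows "gdist E y x = gdist E x y"
  using gdist_sym[OF assms] gdist_sym[OF assms(1,2,4,3)] by simp

lemma gdist_triangle:
  assumes "graph_connected V E" "x \<in> V" "y \<in> V" "z \<in> V"
  shows "gdist E x z \<le> gdist E x y + gdist E y z"
proof -
  obtain xs where xs: "is_walk E xs" "hd xs = x" "last xs = y" "length xs = Suc (gdist E x y)"
    using gdist_walk[OF assms(1-3)] by blast
  obtain ys where ys: "is_walk E ys" "hd ys = y" "last ys = z" "length ys = Suc (gdist E y z)"
    using gdist_walk[OF assms(1,3,4)] by blast
  have w: "is_walk E (xs @ tl ys)" using walk_append[OF xs(1) ys(1)] xs ys by simp
  have ne: "xs \<noteq> []" "ys \<noteq> []" using xs ys by auto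
  have "last (xs @ tl ys) = z"
  proof (cases "tl ys")
    case Nil then have "ys = [hd ys]" using ne by (cases ys) auto
    then show ?thesis using xs ys Nil by (metis append_Nil2 last.simps)
  next
    case (Cons a l) then show ?thesis using ys ne by (metis last_appendR last_tl list.distinct(1))
  qed
  then show ?thesis
    using ne xs ys by (intro walk_gdist[OF w]) auto
qed

fun wr :: "('a \<Rightarrow> 'a \<Rightarrow> bool) \<Rightarrow> 'a \<Rightarrow> nat \<Rightarrow> 'a set" where
  "wr E v 0 = {v}"
| "wr E v (Suc r) = wr E v r \<union> (\<Union>z\<in>wr E v r. {y. E z y})"

lemma card_UN_bound:
  assumes "finite I" "\<And>i. i \<in> I \<Longrightarrow> finite (S i) \<and> card (S i) \<le> m"
  shows "finite (\<Union>i\<in>I. S i) \<and> card (\<Union>i\<in>I. S i) \<le> card I * m"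
proof
  show "finite (\<Union>i\<in>I. S i)" using assms by blast
  have "card (\<Union>i\<in>I. S i) \<le> (\<Sum>i\<in>I. card (S i))" by (rule card_UN_le[OF assms(1)])
  also have "\<dots> \<le> card I * m" using sum_bounded_above[of I "\<lambda>i. card (S i)" m] assms(2) by simp
  finally show "card (\<Union>i\<in>I. S i) \<le> card I * m" .
qed

lemma wr_sub: "is_graph V E \<Longrightarrow> v \<in> V \<Longrightarrow> wr E v r \<subseteq> V"
  by (induction r) (auto simp: is_graph_def)

lemma wr_fin:
  assumes "is_graph V E" "v \<in> V" "\<forall>x\<in>V. finite {y. E x y} \<and> card {y. E x y} \<le> D"
  shows "finite (wr E v r) \<and> card (wr E v r) \<le> (D+1)^r"
proof (induction r)
  case 0 then show ?case by simp
next
  case (Suc r)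
  have U: "finite (\<Union>z\<in>wr E v r. {y. E z y}) \<and> card (\<Union>z\<in>wr E v r. {y. E z y}) \<le> card (wr E v r) * D"
    using Suc wr_sub[OF assms(1,2), of r] assms(3) by (intro card_UN_bound) auto
  have "card (wr E v (Suc r)) \<le> card (wr E v r) + card (\<Union>z\<in>wr E v r. {y. E z y})"
    by (simp add: card_Un_le)
  also have "\<dots> \<le> card (wr E v r) * (D + 1)" using U by simp
  also have "\<dots> \<le> (D+1)^r * (D+1)" using Suc mult_le_mono1 by blast
  finally have "card (wr E v (Suc r)) \<le> (D+1)^(Suc r)" by (simp add: mult.commute)
  then show ?case using U Suc by simp
qed

lemma wr_mono: "r \<le> s \<Longrightarrow> wr E v r \<subseteq> wr E v s"
  by (induction s rule: dec_induct) auto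

lemma walk_wr: "is_walk E xs \<Longrightarrow> i < length xs \<Longrightarrow> xs ! i \<in> wr E (hd xs) i"
proof (induction i)
  case 0 then show ?case by (cases xs) auto
next
  case (Suc i)
  then have "E (xs ! i) (xs ! Suc i)" unfolding is_walk_def by blast
  then show ?case using Suc by auto
qed

lemma ball_fin:
  assumes "bounded_degree_graph V E"
  shows "\<exists>B. \<forall>v\<in>V. finite {w \<in> V. gdist E v w \<le> r} \<and> card {w \<in> V. gdist E v w \<le> r} \<le> B"
proof -
  obtain D where D: "\<forall>x\<in>V. finite {y. E x y} \<and> card {y. E x y} \<le> D"
    and g: "is_graph V E" and c: "graph_connected V E"
    using assms unfolding bounded_degree_graph_def by blast
  have "finite {w \<in> V. gdist E v w \<le> r} \<and> card {w \<in> V. gdist E v w \<le> r} \<le> (D+1)^r" if v: "v \<in> V" for v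
  proof -
    have sub: "{w \<in> V. gdist E v w \<le> r} \<subseteq> wr E v r"
    proof
      fix w assume w: "w \<in> {w \<in> V. gdist E v w \<le> r}"
      obtain xs where xs: "is_walk E xs" "hd xs = v" "last xs = w" "length xs = Suc (gdist E v w)"
        using gdist_walk[OF c v] w by blast
      have "xs ! (length xs - 1) \<in> wr E v (length xs - 1)" using walk_wr[OF xs(1)] xs by simp
      moreover have "xs ! (length xs - 1) = w" using xs by (metis last_conv_nth list.size(3) nat.distinct(1))
      ultimately show "w \<in> wr E v r" using wr_mono[of "length xs - 1" r E v] xs w by auto
    qed
    show ?thesis using wr_fin[OF g v D, of r] sub by (meson card_mono finite_subset order_trans)
  qed
  then show ?thesis by blast
qed

lemma exit_boundary:
  assumes g: "is_graph V E"
  shows "is_walk E xs \<Longrightarrow> hd xs \<in> F \<Longrightarrow> last xs \<notin> F \<Longrightarrow>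
    \<exists>b\<in>vboundary V E F. \<exists>ys. is_walk E ys \<and> hd ys = b \<and> last ys = last xs \<and> length ys < length xs"
proof (induction xs)
  case Nil then show ?case by simp
next
  case (Cons x xs)
  then have ne: "xs \<noteq> []" by auto
  then obtain y zs where yz: "xs = y # zs" by (cases xs) auto
  have e: "E x y" and w: "is_walk E xs" using Cons.prems yz by auto
  show ?case
  proof (cases "y \<in> F")
    case False
    have "y \<in> vboundary V E F" unfolding vboundary_def
      using g e False Cons.prems unfolding is_graph_def by auto
    then show ?thesis using w yz ne by (intro bexI[of _ y] exI[of _ xs]) auto
  next
    case True
    then obtain b ys where "b \<in> vboundary V E F" "is_walk E ys" "hd ys = b" "last ys = last xs" "length ys < length xs"
      using Cons.IH w yz Cons.prems ne by auto
    then show ?thesis using ne by (intro bexI[of _ b] exI[of _ ys]) auto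
  qed
qed


theorem lemma2p9:
  fixes VX :: "'a set" and EdX :: "'a \<Rightarrow> 'a \<Rightarrow> bool"
    and VY :: "'b set" and EdY :: "'b \<Rightarrow> 'b \<Rightarrow> bool"
    and f :: "'a \<Rightarrow> 'b" and k k' :: real
  assumes "bounded_degree_graph VX EdX" and "bounded_degree_graph VY EdY"
    and "amenable_graph VX EdX"
    and "quasi_isometry VX EdX VY EdY f"
    and "k > 0" and "k' > 0"
    and "quasi_k_to_one VX EdX VY EdY f k" and "quasi_k_to_one VX EdX VY EdY f k'"
  shows "k = k'"
proof -
  have gX: "is_graph VX EdX" and cX: "graph_connected VX EdX"
    and DX: "\<exists>D::nat. \<forall>x\<in>VX. finite {y. EdX x y} \<and> card {y. EdX x y} \<le> D"
    using assms(1) unfolding bounded_degree_graph_def by auto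
  have gY: "is_graph VY EdY" and cY: "graph_connected VY EdY"
    using assms(2) unfolding bounded_degree_graph_def by auto
  obtain DXn where DXn: "\<forall>x\<in>VX. finite {y. EdX x y} \<and> card {y. EdX x y} \<le> DXn" using DX by blast
  have fV: "f ` VX \<subseteq> VY" using assms(4) unfolding quasi_isometry_def by blast
  obtain K C0 :: real where K1: "K \<ge> 1" and C0: "C0 \<ge> 0"
    and qi: "\<forall>x\<in>VX. \<forall>x'\<in>VX.
           real (gdist EdY (f x) (f x')) \<le> K * real (gdist EdX x x') + C0 \<and>
           real (gdist EdX x x') \<le> K * real (gdist EdY (f x) (f x')) + C0"
    and surj: "\<forall>y\<in>VY. \<exists>x\<in>VX. real (gdist EdY y (f x)) \<le> C0"
    using assms(4) unfolding quasi_isometry_def by blast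
  define c :: nat where "c = nat \<lceil>C0\<rceil>"
  have cC0: "C0 \<le> real c" unfolding c_def by linarith
  define R :: nat where "R = nat \<lceil>K * (2 * real c + 1) + C0\<rceil>"
  have Rge: "K * (2 * real c + 1) + C0 \<le> real R" unfolding R_def by linarith
  obtain BX where BX: "\<forall>v\<in>VX. finite {w \<in> VX. gdist EdX v w \<le> R} \<and> card {w \<in> VX. gdist EdX v w \<le> R} \<le> BX"
    using ball_fin[OF assms(1)] by blast
  obtain BY where BY: "\<forall>v\<in>VY. finite {w \<in> VY. gdist EdY v w \<le> c} \<and> card {w \<in> VY. gdist EdY v w \<le> c} \<le> BY"
    using ball_fin[OF assms(2)] by blast
  obtain C1 where C1: "C1 > 0" and q1: "\<forall>A. finite A \<and> A \<subseteq> VY \<longrightarrow>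
        \<bar>k * real (card A) - real (card {x \<in> VX. f x \<in> A})\<bar>
          \<le> C1 * real (card (vboundary VY EdY A))"
    using assms(7) unfolding quasi_k_to_one_def by blast
  obtain C2 where C2: "C2 > 0" and q2: "\<forall>A. finite A \<and> A \<subseteq> VY \<longrightarrow>
        \<bar>k' * real (card A) - real (card {x \<in> VX. f x \<in> A})\<bar>
          \<le> C2 * real (card (vboundary VY EdY A))"
    using assms(8) unfolding quasi_k_to_one_def by blast
  define M :: nat where "M = BX * BY"
  define L :: real where "L = (k * (C1 + C2) + \<bar>k - k'\<bar> * C1) * real M"
  have key: "\<bar>k - k'\<bar> * real (card F) \<le> L * real (card (vboundary VX EdX F))"
    if F: "finite F" "F \<subseteq> VX" for F
  proof -
    define A where "A = {y\<in>VY. \<exists>x\<in>F. gdist EdY y (f x) \<le> c}"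
    have AV: "A \<subseteq> VY" unfolding A_def by blast
    have "A \<subseteq> (\<Union>x\<in>F. {w\<in>VY. gdist EdY (f x) w \<le> c})"
    proof
      fix y assume "y \<in> A"
      then obtain x where x: "x \<in> F" "y \<in> VY" "gdist EdY y (f x) \<le> c" unfolding A_def by blast
      have "f x \<in> VY" using x F fV by blast
      then have "gdist EdY (f x) y \<le> c" using gdist_sym_eq[OF gY cY x(2)] x by simp
      then show "y \<in> (\<Union>x\<in>F. {w\<in>VY. gdist EdY (f x) w \<le> c})" using x by blast
    qed
    moreover have "finite (\<Union>x\<in>F. {w\<in>VY. gdist EdY (f x) w \<le> c})"
      using F BY fV by blast
    ultimately have Afin: "finite A" by (rule finite_subset)
    define P where "P = {x\<in>VX. f x \<in> A}"
    have "P \<subseteq> (\<Union>x0\<in>F. {w\<in>VX. gdist EdX x0 w \<le> R})"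
    proof
      fix x assume "x \<in> P"
      then obtain x0 where x0: "x0 \<in> F" "x \<in> VX" "gdist EdY (f x) (f x0) \<le> c"
        unfolding P_def A_def by blast
      have x0V: "x0 \<in> VX" using x0 F by blast
      have "real (gdist EdX x x0) \<le> K * real (gdist EdY (f x) (f x0)) + C0"
        using qi x0V x0 by blast
      also have "\<dots> \<le> K * real c + C0" using x0 K1 by simp
      also have "\<dots> \<le> real R" using Rge K1 by (smt (verit) mult_left_mono of_nat_0_le_iff)
      finally have "gdist EdX x x0 \<le> R" by simp
      then have "gdist EdX x0 x \<le> R" using gdist_sym_eq[OF gX cX x0(2) x0V] by simp
      then show "x \<in> (\<Union>x0\<in>F. {w\<in>VX. gdist EdX x0 w \<le> R})" using x0 by blast
    qed
    moreover have "finite (\<Union>x0\<in>F. {w\<in>VX. gdist EdX x0 w \<le> R})"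
      using F BX by blast
    ultimately have Pfin: "finite P" by (rule finite_subset)
    have FP: "F \<subseteq> P"
    proof
      fix x assume x: "x \<in> F"
      then have xV: "x \<in> VX" using F by blast
      have "gdist EdY (f x) (f x) \<le> c" by (simp add: gdist_self)
      then have "f x \<in> A" unfolding A_def using x xV fV by blast
      then show "x \<in> P" unfolding P_def using xV by blast
    qed
    have cardFP: "card F \<le> card P" by (rule card_mono[OF Pfin FP])
    have dFfin: "finite (vboundary VX EdX F)"
    proof (rule finite_subset)
      show "vboundary VX EdX F \<subseteq> (\<Union>x\<in>F. {y. EdX x y})" unfolding vboundary_def by blast
      show "finite (\<Union>x\<in>F. {y. EdX x y})" using F DXn by blast
    qed
    have dA: "vboundary VY EdY A \<subseteq> (\<Union>b\<in>vboundary VX EdX F. \<Union>z\<in>{w\<in>VX. gdist EdX b w \<le> R}. {w\<in>VY. gdist EdY (f z) w \<le> c})"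
    proof
      fix y assume "y \<in> vboundary VY EdY A"
      then obtain y' where y: "y \<in> VY" "y \<notin> A" "y' \<in> A" "EdY y' y" unfolding vboundary_def by blast
      then obtain x where x: "x \<in> F" "y' \<in> VY" "gdist EdY y' (f x) \<le> c" unfolding A_def by blast
      have xV: "x \<in> VX" using x F by blast
      obtain x2 where x2: "x2 \<in> VX" "real (gdist EdY y (f x2)) \<le> C0" using surj y by blast
      have x2c: "gdist EdY y (f x2) \<le> c" using x2 cC0 by simp
      have x2F: "x2 \<notin> F" using y x2 x2c unfolding A_def by blast
      have fxV: "f x \<in> VY" and fx2V: "f x2 \<in> VY" using xV x2 fV by auto
      have "gdist EdY (f x) (f x2) \<le> gdist EdY (f x) y' + gdist EdY y' (f x2)"
        by (rule gdist_triangle[OF cY fxV x(2) fx2V])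
      also have "\<dots> \<le> gdist EdY (f x) y' + (gdist EdY y' y + gdist EdY y (f x2))"
        using gdist_triangle[OF cY x(2) y(1) fx2V] by simp
      also have "\<dots> \<le> c + (1 + c)"
        using gdist_sym_eq[OF gY cY x(2) fxV] x(3) gdist_edge[of EdY y' y, OF y(4)] x2c by simp
      finally have d1: "gdist EdY (f x) (f x2) \<le> 2 * c + 1" by simp
      then have "real (gdist EdY (f x) (f x2)) \<le> real (2 * c + 1)" by (simp only: of_nat_le_iff)
      then have d1r: "real (gdist EdY (f x) (f x2)) \<le> 2 * real c + 1" by simp
      have "real (gdist EdX x x2) \<le> K * real (gdist EdY (f x) (f x2)) + C0"
        using qi xV x2 by blast
      also have "\<dots> \<le> K * (2 * real c + 1) + C0"
        using d1r K1 by (intro add_right_mono mult_left_mono) simp_all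
      also have "\<dots> \<le> real R" by (rule Rge)
      finally have dxx2: "gdist EdX x x2 \<le> R" by simp
      obtain xs where xs: "is_walk EdX xs" "hd xs = x" "last xs = x2" "length xs = Suc (gdist EdX x x2)"
        using gdist_walk[OF cX xV x2(1)] by blast
      obtain b ys where b: "b \<in> vboundary VX EdX F" and ys: "is_walk EdX ys" "hd ys = b" "last ys = x2" "length ys < length xs"
        using exit_boundary[OF gX, of xs F] xs(1) xs(2,3,4) x(1) x2F by blast
      have "gdist EdX b x2 \<le> R" using ys xs dxx2 by (intro walk_gdist[OF ys(1)]) auto
      then have z: "x2 \<in> {w\<in>VX. gdist EdX b w \<le> R}" using x2 by blast
      have "gdist EdY (f x2) y \<le> c" using gdist_sym_eq[OF gY cY y(1) fx2V] x2c by simp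
      then show "y \<in> (\<Union>b\<in>vboundary VX EdX F. \<Union>z\<in>{w\<in>VX. gdist EdX b w \<le> R}. {w\<in>VY. gdist EdY (f z) w \<le> c})"
        using b z y by blast
    qed
    have inner: "finite (\<Union>z\<in>{w\<in>VX. gdist EdX b w \<le> R}. {w\<in>VY. gdist EdY (f z) w \<le> c})
       \<and> card (\<Union>z\<in>{w\<in>VX. gdist EdX b w \<le> R}. {w\<in>VY. gdist EdY (f z) w \<le> c}) \<le> M"
      if b: "b \<in> vboundary VX EdX F" for b
    proof -
      have bV: "b \<in> VX" using b unfolding vboundary_def by blast
      have h: "finite (\<Union>z\<in>{w\<in>VX. gdist EdX b w \<le> R}. {w\<in>VY. gdist EdY (f z) w \<le> c})
       \<and> card (\<Union>z\<in>{w\<in>VX. gdist EdX b w \<le> R}. {w\<in>VY. gdist EdY (f z) w \<le> c}) \<le> card {w\<in>VX. gdist EdX b w \<le> R} * BY"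
        using BX bV BY fV by (intro card_UN_bound) auto
      have "card {w\<in>VX. gdist EdX b w \<le> R} * BY \<le> BX * BY" using BX bV mult_le_mono1 by blast
      then show ?thesis using h unfolding M_def by linarith
    qed
    have outer: "finite (\<Union>b\<in>vboundary VX EdX F. \<Union>z\<in>{w\<in>VX. gdist EdX b w \<le> R}. {w\<in>VY. gdist EdY (f z) w \<le> c})
       \<and> card (\<Union>b\<in>vboundary VX EdX F. \<Union>z\<in>{w\<in>VX. gdist EdX b w \<le> R}. {w\<in>VY. gdist EdY (f z) w \<le> c}) \<le> card (vboundary VX EdX F) * M"
      using inner dFfin by (intro card_UN_bound) auto
    have cA: "card (vboundary VY EdY A) \<le> card (vboundary VX EdX F) * M"
      using card_mono[OF conjunct1[OF outer] dA] outer by linarith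
    define a where "a = real (card A)"
    define p where "p = real (card P)"
    define bA where "bA = real (card (vboundary VY EdY A))"
    define bF where "bF = real (card (vboundary VX EdX F))"
    have h1: "\<bar>k * a - p\<bar> \<le> C1 * bA" using q1 Afin AV unfolding a_def p_def bA_def P_def by blast
    have h2: "\<bar>k' * a - p\<bar> \<le> C2 * bA" using q2 Afin AV unfolding a_def p_def bA_def P_def by blast
    have h3: "real (card F) \<le> p" using cardFP unfolding p_def by simp
    have h4: "bA \<le> bF * real M" using cA unfolding bA_def bF_def by (metis of_nat_le_iff of_nat_mult)
    have a0: "a \<ge> 0" "bA \<ge> 0" "bF \<ge> 0" unfolding a_def bA_def bF_def by auto
    have e1: "\<bar>k - k'\<bar> * a \<le> (C1 + C2) * bA"
    proof -
      have "\<bar>k - k'\<bar> * a = \<bar>(k * a - p) - (k' * a - p)\<bar>" using a0 by (simp add: abs_mult left_diff_distrib[symmetric])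
      also have "\<dots> \<le> \<bar>k * a - p\<bar> + \<bar>k' * a - p\<bar>" by (rule abs_triangle_ineq4)
      also have "\<dots> \<le> (C1 + C2) * bA" using h1 h2 by (simp add: distrib_right)
      finally show ?thesis .
    qed
    have e2: "p \<le> k * a + C1 * bA" using h1 by linarith
    have "\<bar>k - k'\<bar> * real (card F) \<le> \<bar>k - k'\<bar> * (k * a + C1 * bA)"
      using h3 e2 by (intro mult_left_mono) auto
    also have "\<dots> = k * (\<bar>k - k'\<bar> * a) + \<bar>k - k'\<bar> * C1 * bA" by (simp add: algebra_simps)
    also have "\<dots> \<le> k * ((C1 + C2) * bA) + \<bar>k - k'\<bar> * C1 * bA"
      using e1 assms(5) by (intro add_right_mono mult_left_mono) auto
    also have "\<dots> = (k * (C1 + C2) + \<bar>k - k'\<bar> * C1) * bA" by (simp add: algebra_simps)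
    also have "\<dots> \<le> (k * (C1 + C2) + \<bar>k - k'\<bar> * C1) * (bF * real M)"
      using h4 assms(5) C1 C2 by (intro mult_left_mono) auto
    also have "\<dots> = L * bF" unfolding L_def by (simp add: algebra_simps)
    finally show ?thesis unfolding bF_def .
  qed
  obtain Fs :: "nat \<Rightarrow> 'a set" where Fs: "\<forall>n. finite (Fs n) \<and> Fs n \<noteq> {} \<and> Fs n \<subseteq> VX"
    and lim: "(\<lambda>n. real (card (vboundary VX EdX (Fs n))) / real (card (Fs n))) \<longlonglongrightarrow> 0"
    using assms(3) unfolding amenable_graph_def by blast
  have lim2: "(\<lambda>n. L * (real (card (vboundary VX EdX (Fs n))) / real (card (Fs n)))) \<longlonglongrightarrow> L * 0"
    by (intro tendsto_mult tendsto_const lim)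
  have le: "\<bar>k - k'\<bar> \<le> L * (real (card (vboundary VX EdX (Fs n))) / real (card (Fs n)))" for n
  proof -
    have pos: "real (card (Fs n)) > 0" using Fs card_gt_0_iff by auto
    have "\<bar>k - k'\<bar> * real (card (Fs n)) \<le> L * real (card (vboundary VX EdX (Fs n)))"
      using key Fs by blast
    then show ?thesis using pos by (simp add: divide_simps mult.commute mult.left_commute)
  qed
  have "\<bar>k - k'\<bar> \<le> L * 0"
    by (rule LIMSEQ_le[OF tendsto_const lim2]) (use le in auto)
  then show ?thesis by simp
qed

end
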